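(* Let $A=(a_{ij}) \in \mathbb{R}^{m \times r}$ and $B=(b_{ji}) \in \mathbb{R}^{r \times n}$ with $B$ of full rank $n$. The following are equivalent: (i) for all $\kappa \in \mathbb{R}^r_+$ and $y \in \mathbb{R}^m$, the system $\sum_{j=1}^r a_{ij}\, \kappa_j\, x_1^{b_{j1}} \cdots x_n^{b_{jn}} = y_i$, $i = 1, \dots, m$, has at most one solution $x \in \mathbb{R}^n_+$; (ii) $\sigma(\ker(A)) \cap \sigma(\mathrm{im}(B)) = \{0\}$.
   Context: $\mathbb{R}_+$ denotes the strictly positive reals; exponents are arbitrary reals. $\sigma$ is the componentwise sign vector in $\{-,0,+\}^r$, $\sigma(T)=\{\sigma(x)\mid x\in T\}$, and $0$ denotes the zero sign vector. *)

theory Defs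
  imports "HOL-Analysis.Analysis"
begin

text \<open>Componentwise sign vector, with values in {-1,0,1} (encoding {-,0,+}).\<close>
definition sign_vec :: "real^'r \<Rightarrow> real^'r" where
  "sign_vec x = (\<chi> j. sgn (x $ j))"

definition mat_ker :: "real^'r^'m \<Rightarrow> (real^'r) set" where
  "mat_ker A = {x. A *v x = 0}"

definition mat_im :: "real^'n^'r \<Rightarrow> (real^'r) set" where
  "mat_im B = range (\<lambda>z. B *v z)"

text \<open>Generalized polynomial map: component i is
  sum_j a_ij kappa_j x_1^(b_j1) ... x_n^(b_jn).\<close>
definition gen_poly_map :: "real^'r^'m \<Rightarrow> real^'n^'r \<Rightarrow> real^'r \<Rightarrow> real^'n \<Rightarrow> real^'m" where
  "gen_poly_map A B \<kappa> x = (\<chi> i. \<Sum>j\<in>UNIV. A $ i $ j * \<kappa> $ j * (\<Prod>k\<in>UNIV. (x $ k) powr (B $ j $ k)))"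

definition pos_vec :: "real^'n \<Rightarrow> bool" where
  "pos_vec x \<longleftrightarrow> (\<forall>k. x $ k > 0)"

end

theory Submission
  imports Defs
begin

definition Lv :: "real^'n \<Rightarrow> real^'n" where "Lv x = (\<chi> k. ln (x $ k))"

lemma gpm_exp:
  fixes A :: "real^'r^'m" and B :: "real^'n^'r"
  assumes "pos_vec x"
  shows "gen_poly_map A B \<kappa> x = A *v (\<chi> j. \<kappa> $ j * exp ((B *v Lv x) $ j))"
proof -
  have "\<And>j. (\<Prod>k\<in>UNIV. (x $ k) powr (B $ j $ k)) = exp ((B *v Lv x) $ j)"
  proof -
    fix j
    have "(\<Prod>k\<in>UNIV. (x $ k) powr (B $ j $ k)) = (\<Prod>k\<in>UNIV. exp (B $ j $ k * ln (x $ k)))"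
      using assms by (intro prod.cong) (auto simp: pos_vec_def powr_def less_imp_neq[symmetric])
    also have "\<dots> = exp (\<Sum>k\<in>UNIV. B $ j $ k * ln (x $ k))" by (simp add: exp_sum)
    finally show "?thesis j" by (simp add: matrix_vector_mult_def Lv_def)
  qed
  then show ?thesis
    by (simp add: gen_poly_map_def matrix_vector_mult_def mult.assoc)
qed

lemma sgn_exp_diff: "sgn (exp a - exp b) = sgn (a - b :: real)"
  by (cases a b rule: linorder_cases) auto

lemma Lv_inj: "pos_vec x \<Longrightarrow> pos_vec x' \<Longrightarrow> Lv x = Lv x' \<Longrightarrow> x = x'"
  unfolding Lv_def pos_vec_def vec_eq_iff
  by (metis ln_inj_iff vec_lambda_beta)

theorem mainTheorem19:
  fixes A :: "real^'r^'m" and B :: "real^'n^'r"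
  assumes "rank B = CARD('n)"
  shows "(\<forall>\<kappa> y. pos_vec \<kappa> \<longrightarrow>
            (\<forall>x x'. pos_vec x \<and> pos_vec x' \<and> gen_poly_map A B \<kappa> x = y \<and> gen_poly_map A B \<kappa> x' = y
                \<longrightarrow> x = x'))
     \<longleftrightarrow> (sign_vec ` mat_ker A \<inter> sign_vec ` mat_im B = {0})"
proof -
  have inj: "inj ((*v) B)" using assms full_rank_injective by blast
  have s0: "sign_vec 0 = (0::real^'a)" by (simp add: sign_vec_def vec_eq_iff)
  have zin: "0 \<in> sign_vec ` mat_ker A \<inter> sign_vec ` mat_im B"
    unfolding mat_ker_def mat_im_def
    by (metis (mono_tags, lifting) IntI image_eqI matrix_vector_mult_0_right mem_Collect_eq rangeI s0)
  have sv0: "sign_vec z = 0 \<longleftrightarrow> z = (0::real^'a)" for z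
    by (simp add: sign_vec_def vec_eq_iff sgn_0_0)
  show ?thesis
  proof
    assume H: "\<forall>\<kappa> y. pos_vec \<kappa> \<longrightarrow>
            (\<forall>x x'. pos_vec x \<and> pos_vec x' \<and> gen_poly_map A B \<kappa> x = y \<and> gen_poly_map A B \<kappa> x' = y
                \<longrightarrow> x = x')"
    have "s = 0" if s: "s \<in> sign_vec ` mat_ker A \<inter> sign_vec ` mat_im B" for s
    proof -
      obtain v w where v: "A *v v = 0" "s = sign_vec v" and w: "s = sign_vec (B *v w)"
        using s unfolding mat_ker_def mat_im_def by auto
      have sg: "sgn (v $ j) = sgn ((B *v w) $ j)" for j
        using v(2) w by (metis sign_vec_def vec_lambda_beta)
      define \<kappa> :: "real^'r" where "\<kappa> = (\<chi> j. if (B *v w) $ j = 0 then 1 else v $ j / (exp ((B *v w) $ j) - 1))"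
      define x :: "real^'n" where "x = (\<chi> k. exp (w $ k))"
      define x' :: "real^'n" where "x' = (\<chi> k. 1)"
      have px: "pos_vec x" "pos_vec x'" by (auto simp: pos_vec_def x_def x'_def)
      have Lx: "Lv x = w" "Lv x' = 0" by (auto simp: Lv_def x_def x'_def vec_eq_iff)
      have pk: "pos_vec \<kappa>"
        unfolding pos_vec_def
      proof
        fix j
        show "\<kappa> $ j > 0"
        proof (cases "(B *v w) $ j = 0")
          case True then show ?thesis by (simp add: \<kappa>_def)
        next
          case False
          have "sgn (v $ j) = sgn (exp ((B *v w) $ j) - 1)"
            using sg[of j] sgn_exp_diff[of "(B *v w) $ j" 0] by simp
          moreover have "v $ j \<noteq> 0" using sg[of j] False by (auto simp: sgn_0_0)
          ultimately show ?thesis using False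
            by (auto simp: \<kappa>_def sgn_if divide_pos_neg divide_pos_pos split: if_splits
                intro: divide_neg_neg)
        qed
      qed
      have diff: "(\<chi> j. \<kappa> $ j * exp ((B *v w) $ j)) - (\<chi> j. \<kappa> $ j * exp ((B *v 0) $ j)) = v"
      proof (subst vec_eq_iff, intro allI)
        fix j
        show "((\<chi> j. \<kappa> $ j * exp ((B *v w) $ j)) - (\<chi> j. \<kappa> $ j * exp ((B *v 0) $ j))) $ j = v $ j"
        proof (cases "(B *v w) $ j = 0")
          case True
          then have "v $ j = 0" using sg[of j] by (simp add: sgn_0_0)
          then show ?thesis using True by (simp add: \<kappa>_def)
        next
          case False
          have "exp ((B *v w) $ j) \<noteq> 1" using False by simp
          then have ne: "exp ((B *v w) $ j) - 1 \<noteq> 0" by simp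
          have "\<kappa> $ j * exp ((B *v w) $ j) - \<kappa> $ j * exp 0 = \<kappa> $ j * (exp ((B *v w) $ j) - 1)"
            by (simp add: right_diff_distrib)
          also have "\<dots> = v $ j" using False ne by (simp add: \<kappa>_def)
          finally show ?thesis by simp
        qed
      qed
      have "gen_poly_map A B \<kappa> x = gen_poly_map A B \<kappa> x'"
      proof -
        have "gen_poly_map A B \<kappa> x - gen_poly_map A B \<kappa> x' = A *v v"
          using diff by (simp add: gpm_exp[OF px(1)] gpm_exp[OF px(2)] Lx matrix_vector_mult_diff_distrib[symmetric])
        then show ?thesis using v(1) by simp
      qed
      then have "x = x'" using H pk px by blast
      then have "w = 0" using Lx by simp
      then show "s = 0" using w s0 by simp
    qed
    then show "sign_vec ` mat_ker A \<inter> sign_vec ` mat_im B = {0}" using zin by blast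
  next
    assume H: "sign_vec ` mat_ker A \<inter> sign_vec ` mat_im B = {0}"
    show "\<forall>\<kappa> y. pos_vec \<kappa> \<longrightarrow>
            (\<forall>x x'. pos_vec x \<and> pos_vec x' \<and> gen_poly_map A B \<kappa> x = y \<and> gen_poly_map A B \<kappa> x' = y
                \<longrightarrow> x = x')"
    proof (intro allI impI, elim conjE)
      fix \<kappa> y x x' :: "_"
      assume pk: "pos_vec \<kappa>" and px: "pos_vec x" "pos_vec x'"
        and e1: "gen_poly_map A B \<kappa> x = y" and e2: "gen_poly_map A B \<kappa> x' = y"
      define v where "v = (\<chi> j. \<kappa> $ j * exp ((B *v Lv x) $ j)) - (\<chi> j. \<kappa> $ j * exp ((B *v Lv x') $ j))"
      have Av: "A *v v = 0"
        using e1 e2 by (simp add: v_def matrix_vector_mult_diff_distrib gpm_exp[OF px(1)] gpm_exp[OF px(2)])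
      have "sign_vec v = sign_vec (B *v (Lv x - Lv x'))"
      proof -
        have "sgn (v $ j) = sgn ((B *v (Lv x - Lv x')) $ j)" for j
        proof -
          have "\<kappa> $ j > 0" using pk by (simp add: pos_vec_def)
          then have "sgn (v $ j) = sgn (exp ((B *v Lv x) $ j) - exp ((B *v Lv x') $ j))"
            by (simp add: v_def right_diff_distrib[symmetric] sgn_mult)
          also have "\<dots> = sgn ((B *v (Lv x - Lv x')) $ j)"
            by (simp add: sgn_exp_diff matrix_vector_mult_diff_distrib)
          finally show ?thesis .
        qed
        then show ?thesis by (simp add: sign_vec_def)
      qed
      then have "sign_vec v \<in> sign_vec ` mat_ker A \<inter> sign_vec ` mat_im B"
        using Av unfolding mat_ker_def mat_im_def
        by (metis (mono_tags, lifting) IntI image_eqI mem_Collect_eq rangeI)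
      then have "sign_vec (B *v (Lv x - Lv x')) = 0" using H \<open>sign_vec v = _\<close> by auto
      then have "B *v (Lv x - Lv x') = 0" using sv0 by blast
      then have "B *v (Lv x - Lv x') = B *v 0" by simp
      then have "Lv x - Lv x' = 0" using inj by (meson injD)
      then show "x = x'" using Lv_inj px by simp
    qed
  qed
qed

end
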